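(* Let $n_x, d \in \mathbb{Z}^+$, let $\mathsf{X} \in \mathbb{R}^{n_x \times d}$ be arbitrary and let $\gamma_1, \ldots, \gamma_d > 0$. Let $\tilde{\mathsf{K}}_\nabla$ be the $n_x(d+1) \times n_x(d+1)$ modified gradient-enhanced Gaussian kernel matrix defined in the context. Then for every row index $a \in \{1, \ldots, n_x\}$, the sum of the absolute values of the off-diagonal entries of row $a$ of $\tilde{\mathsf{K}}_\nabla$ is at most $$u_{\text{G}}(n_x,d) = (n_x-1) \frac{1 + \sqrt{1 + 4d}}{2} e^{-\frac{1 + 2d - \sqrt{1 + 4d}}{4d}}.$$
   Context: Write $\tilde{x}_{ij} = \gamma_j x_{ij}$ for $1 \le i \le n_x$, $1 \le j \le d$, where $x_{ij}$ is the $(i,j)$ entry of $\mathsf{X}$, and let $\tilde{\mathbf{x}}_{i:} \in \mathbb{R}^d$ be the vector $(\tilde{x}_{i1},\ldots,\tilde{x}_{id})$. Define the $n_x\times n_x$ matrices $\mathsf{K}$ and $\tilde{\mathsf{R}}_j$ ($1\le j\le d$) by $\mathsf{K}_{ab} = \exp\!\left(-\tfrac12 \|\tilde{\mathbf{x}}_{a:} - \tilde{\mathbf{x}}_{b:}\|_2^2\right)$ and $(\tilde{\mathsf{R}}_j)_{ab} = \tilde{x}_{aj} - \tilde{x}_{bj}$. The matrix $\tilde{\mathsf{K}}_\nabla$ is the symmetric block matrix with $(d+1)\times(d+1)$ blocks of size $n_x \times n_x$, indexed by $0,1,\ldots,d$, whose blocks are: block $(0,0)$ is $\mathsf{K}$;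 block $(0,j)$ has entries $(\tilde{\mathsf{R}}_j)_{ab}\mathsf{K}_{ab}$; block $(i,0)$ has entries $-(\tilde{\mathsf{R}}_i)_{ab}\mathsf{K}_{ab}$; block $(i,j)$ for $i,j \ge 1$ has entries $\left(\delta_{ij} - (\tilde{\mathsf{R}}_i)_{ab}(\tilde{\mathsf{R}}_j)_{ab}\right)\mathsf{K}_{ab}$, where $\delta_{ij}$ is the Kronecker delta. (Equivalently, $\tilde{\mathsf{K}}_\nabla = \mathsf{P}^{-1}\mathsf{K}_\nabla\mathsf{P}^{-1}$ where $\mathsf{K}_\nabla$ is the gradient-enhanced Gaussian kernel matrix with kernel $k(\mathbf{x},\mathbf{y}) = e^{-\frac12\sum_i \gamma_i^2(x_i-y_i)^2}$ and $\mathsf{P} = \mathrm{diag}(\mathbf{1}_{n_x}, \gamma_1\mathbf{1}_{n_x},\ldots,\gamma_d\mathbf{1}_{n_x})$.) Rows $1,\ldots,n_x$ are the rows of block-row $0$. *)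

theory Defs
  imports "HOL-Analysis.Analysis"
begin

(* Matrices are indexed 1-based as in the paper: X i j for 1 <= i <= nx, 1 <= j <= d;
   gamma j for 1 <= j <= d. *)

definition xt :: "(nat \<Rightarrow> nat \<Rightarrow> real) \<Rightarrow> (nat \<Rightarrow> real) \<Rightarrow> nat \<Rightarrow> nat \<Rightarrow> real" where
  "xt X \<gamma> i j = \<gamma> j * X i j"

definition Kmat :: "nat \<Rightarrow> (nat \<Rightarrow> nat \<Rightarrow> real) \<Rightarrow> (nat \<Rightarrow> real) \<Rightarrow> nat \<Rightarrow> nat \<Rightarrow> real" where
  "Kmat d X \<gamma> a b = exp (- (1/2) * (\<Sum>j=1..d. (xt X \<gamma> a j - xt X \<gamma> b j)^2))"

definition Rmat :: "(nat \<Rightarrow> nat \<Rightarrow> real) \<Rightarrow> (nat \<Rightarrow> real) \<Rightarrow> nat \<Rightarrow> nat \<Rightarrow> nat \<Rightarrow> real" where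
  "Rmat X \<gamma> j a b = xt X \<gamma> a j - xt X \<gamma> b j"

text \<open>Entry of the modified gradient-enhanced kernel matrix in block (p,q), p,q in {0..d},
  local row a, local column b (both in {1..nx}).\<close>
definition Kgrad :: "nat \<Rightarrow> (nat \<Rightarrow> nat \<Rightarrow> real) \<Rightarrow> (nat \<Rightarrow> real) \<Rightarrow> nat \<Rightarrow> nat \<Rightarrow> nat \<Rightarrow> nat \<Rightarrow> real" where
  "Kgrad d X \<gamma> p q a b =
     (if p = 0 \<and> q = 0 then Kmat d X \<gamma> a b
      else if p = 0 then Rmat X \<gamma> q a b * Kmat d X \<gamma> a b
      else if q = 0 then - Rmat X \<gamma> p a b * Kmat d X \<gamma> a b
      else ((if p = q then 1 else 0) - Rmat X \<gamma> p a b * Rmat X \<gamma> q a b) * Kmat d X \<gamma> a b)"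

definition uG :: "nat \<Rightarrow> nat \<Rightarrow> real" where
  "uG nx d = (real nx - 1) * ((1 + sqrt (1 + 4 * real d)) / 2)
              * exp (- ((1 + 2 * real d - sqrt (1 + 4 * real d)) / (4 * real d)))"

end

theory Submission
  imports Defs
begin

lemma key1:
  fixes s :: real and d :: nat
  assumes d: "d \<ge> 1" and s: "s \<ge> 0"
  shows "(1 + s) * exp (- (s^2 / (2 * real d))) \<le>
     ((1 + sqrt (1 + 4 * real d)) / 2) * exp (- ((1 + 2 * real d - sqrt (1 + 4 * real d)) / (4 * real d)))"
proof -
  define t where "t = sqrt (1 + 4 * real d)"
  have t2: "t^2 = 1 + 4 * real d" unfolding t_def by simp
  have t1: "t \<ge> 1" unfolding t_def by simp
  define s0 where "s0 = (t - 1) / 2"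
  have s00: "s0 \<ge> 0" using t1 unfolding s0_def by simp
  have s0d: "s0^2 + s0 = real d" unfolding s0_def using t2 by (simp add: power2_eq_square field_simps)
  have dpos: "real d > 0" using d by simp
  have e1: "(1 + 2 * real d - t) / (4 * real d) = s0^2 / (2 * real d)"
  proof -
    have sq: "s0^2 = (1 + 2 * real d - t) / 2" using s0d unfolding s0_def by (simp add: field_simps)
    show ?thesis using dpos by (simp add: sq field_simps)
  qed
  have c1: "1 + s0 = (1 + t) / 2" unfolding s0_def by (simp add: field_simps)
  define x where "x = (s - s0) / (1 + s0)"
  have hx: "1 + s = (1 + s0) * (1 + x)" unfolding x_def using s00 by (simp add: field_simps)
  have x2: "x = (s - s0) * s0 / real d"
    unfolding x_def using s00 dpos s0d[symmetric] by (simp add: field_simps power2_eq_square)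
  have x3: "x \<le> (s^2 - s0^2) / (2 * real d)"
  proof -
    have "(s - s0) * s0 * 2 \<le> s^2 - s0^2"
      using sum_squares_ge_zero[of "s - s0" 0] by (simp add: power2_eq_square algebra_simps)
    from divide_right_mono[OF this, of "2 * real d"] dpos show ?thesis unfolding x2 by simp
  qed
  have "(1 + s) * exp (- (s^2 / (2 * real d))) \<le> (1 + s0) * exp x * exp (- (s^2 / (2 * real d)))"
    unfolding hx using s00 exp_ge_add_one_self[of x] by (intro mult_right_mono mult_left_mono) auto
  also have "\<dots> = (1 + s0) * exp (x - s^2 / (2 * real d))"
    by (simp add: exp_diff exp_minus field_simps)
  also have "\<dots> \<le> (1 + s0) * exp (- (s0^2 / (2 * real d)))"
  proof -
    have "x - s^2 / (2 * real d) \<le> - (s0^2 / (2 * real d))"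
      using x3 by (simp add: diff_divide_distrib)
    then show ?thesis using s00 by (intro mult_left_mono) auto
  qed
  finally show ?thesis unfolding t_def[symmetric] e1 c1 .
qed

lemma key2:
  fixes r :: "nat \<Rightarrow> real" and d :: nat
  assumes d: "d \<ge> 1"
  shows "(1 + (\<Sum>j=1..d. \<bar>r j\<bar>)) * exp (- (1/2) * (\<Sum>j=1..d. (r j)^2)) \<le>
     ((1 + sqrt (1 + 4 * real d)) / 2) * exp (- ((1 + 2 * real d - sqrt (1 + 4 * real d)) / (4 * real d)))"
proof -
  define s where "s = (\<Sum>j=1..d. \<bar>r j\<bar>)"
  have s0: "s \<ge> 0" unfolding s_def by (simp add: sum_nonneg)
  have cs: "s^2 \<le> (\<Sum>j=1..d. (r j)^2) * real d"
    using sum_squared_le_sum_of_squares[of "\<lambda>j. \<bar>r j\<bar>" "{1..d}"] unfolding s_def by simp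
  have dpos: "real d > 0" using d by simp
  have "- (1/2) * (\<Sum>j=1..d. (r j)^2) \<le> - (s^2 / (2 * real d))"
    using cs dpos by (simp add: field_simps)
  then have "(1 + s) * exp (- (1/2) * (\<Sum>j=1..d. (r j)^2)) \<le> (1 + s) * exp (- (s^2 / (2 * real d)))"
    using s0 by (intro mult_left_mono) auto
  also have "\<dots> \<le> ((1 + sqrt (1 + 4 * real d)) / 2) * exp (- ((1 + 2 * real d - sqrt (1 + 4 * real d)) / (4 * real d)))" by (rule key1[OF d s0])
  finally show ?thesis unfolding s_def .
qed

theorem proposition1:
  fixes nx d :: nat and X :: "nat \<Rightarrow> nat \<Rightarrow> real" and \<gamma> :: "nat \<Rightarrow> real" and a :: nat
  assumes "nx \<ge> 1" and "d \<ge> 1"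
    and "\<forall>j\<in>{1..d}. \<gamma> j > 0"
    and "a \<in> {1..nx}"
  shows "(\<Sum>(q, b) \<in> ({0..d} \<times> {1..nx}) - {(0, a)}. \<bar>Kgrad d X \<gamma> 0 q a b\<bar>) \<le> uG nx d"
proof -
  define C where "C = ((1 + sqrt (1 + 4 * real d)) / 2) * exp (- ((1 + 2 * real d - sqrt (1 + 4 * real d)) / (4 * real d)))"
  let ?f = "\<lambda>(q, b). \<bar>Kgrad d X \<gamma> 0 q a b\<bar>"
  have split: "({0..d} \<times> {1..nx}) - {(0, a)} = ({0..d} \<times> ({1..nx} - {a})) \<union> ({1..d} \<times> {a})"
    using assms(4) by auto
  have disj: "({0..d} \<times> ({1..nx} - {a})) \<inter> ({1..d} \<times> {a}) = {}" by auto
  have zero: "sum ?f ({1..d} \<times> {a}) = 0"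
    by (rule sum.neutral) (auto simp: Kgrad_def Rmat_def)
  have inner: "(\<Sum>q\<in>{0..d}. ?f (q, b)) \<le> C" for b
  proof -
    have "{0..d} = insert 0 {1..d}" by auto
    then have "(\<Sum>q\<in>{0..d}. ?f (q, b)) = ?f (0, b) + (\<Sum>q\<in>{1..d}. ?f (q, b))" by simp
    also have "\<dots> = Kmat d X \<gamma> a b + (\<Sum>q\<in>{1..d}. \<bar>Rmat X \<gamma> q a b\<bar> * Kmat d X \<gamma> a b)"
      by (simp add: Kgrad_def Kmat_def abs_mult)
    also have "\<dots> = (1 + (\<Sum>j=1..d. \<bar>Rmat X \<gamma> j a b\<bar>)) * exp (- (1/2) * (\<Sum>j=1..d. (Rmat X \<gamma> j a b)^2))"
      by (simp add: Kmat_def Rmat_def sum_distrib_right algebra_simps)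
    also have "\<dots> \<le> C" unfolding C_def by (rule key2[OF assms(2)])
    finally show ?thesis .
  qed
  have "sum ?f (({0..d} \<times> {1..nx}) - {(0, a)}) = sum ?f ({0..d} \<times> ({1..nx} - {a}))"
    unfolding split by (subst sum.union_disjoint) (use disj zero in auto)
  also have "\<dots> = (\<Sum>b\<in>{1..nx} - {a}. \<Sum>q\<in>{0..d}. ?f (q, b))"
    by (subst sum.cartesian_product[symmetric]) (subst sum.swap, simp add: sum.cartesian_product)
  also have "\<dots> \<le> (\<Sum>b\<in>{1..nx} - {a}. C)" by (rule sum_mono) (rule inner)
  also have "\<dots> = (real nx - 1) * C" using assms(1,4) by (simp add: of_nat_diff)
  also have "\<dots> = uG nx d" unfolding uG_def C_def by simp
  finally show ?thesis .
qed

end
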